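(* Let $\phi$ be a Möbius transformation of $\overline{\mathbb{R}}^n$ with $b:=\phi^{-1}(\infty)\in\mathbb{R}^n\setminus\{0\}$, let $S^{n-1}(b,R)$ be its isometric sphere, $\sigma$ the reflection in it, and $a=\sigma(0)$. Let $\Sigma_0$ be a $k$-dimensional affine plane containing $\phi(0)$ and orthogonal to $\phi(\infty)-\phi(a)$. Then for every $0<r<|b|$, $\Sigma_0\cap\phi(B^n_r)$ is a flat $k$-disk of radius $\dfrac{R^2r}{|b|\sqrt{|b|^2-r^2}}$.
   Context: $B^n_r$ is the open ball of radius $r$ centered at $0$. The reflection in $S^{n-1}(b,R)$ is $\sigma(x)=b+\frac{R^2}{|x-b|^2}(x-b)$ for $x\ne b$, $\sigma(b)=\infty$, $\sigma(\infty)=b$. A Möbius transformation is a finite composition of reflections in spheres or hyperplanes; if $\phi(\infty)\ne\infty$ then $\phi=\psi\circ\sigma$ for a unique reflection $\sigma$ in a sphere centered at $\phi^{-1}(\infty)$ (the isometric sphere) and a unique Euclidean isometry $\psi$. *)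

theory Defs
  imports "HOL-Analysis.Analysis"
begin

text \<open>The one-point compactification of R^n is modelled as 'a option, where None is the
point at infinity and Some x is the finite point x.\<close>

definition sphere_reflection :: "'a::euclidean_space \<Rightarrow> real \<Rightarrow> 'a option \<Rightarrow> 'a option" where
  "sphere_reflection b R p =
     (case p of None \<Rightarrow> Some b
      | Some x \<Rightarrow> (if x = b then None
                   else Some (b + (R\<^sup>2 / (norm (x - b))\<^sup>2) *\<^sub>R (x - b))))"

definition hyperplane_reflection :: "'a::euclidean_space \<Rightarrow> real \<Rightarrow> 'a option \<Rightarrow> 'a option" where
  "hyperplane_reflection u c p =
     map_option (\<lambda>x. x - ((2 * (x \<bullet> u - c)) / (u \<bullet> u)) *\<^sub>R u) p"

inductive moebius :: "('a::euclidean_space option \<Rightarrow> 'a option) \<Rightarrow> bool" where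
  refl_sphere: "R > 0 \<Longrightarrow> moebius (sphere_reflection b R)"
| refl_hyperplane: "u \<noteq> 0 \<Longrightarrow> moebius (hyperplane_reflection u c)"
| comp: "moebius f \<Longrightarrow> moebius g \<Longrightarrow> moebius (f \<circ> g)"

definition euclidean_isometry :: "('a::euclidean_space \<Rightarrow> 'a) \<Rightarrow> bool" where
  "euclidean_isometry \<psi> \<longleftrightarrow> (\<forall>x y. dist (\<psi> x) (\<psi> y) = dist x y)"

end

theory Submission
  imports Defs
begin

lemma sig_inv:
  fixes b z :: "'a::real_inner"
  assumes "z \<noteq> b" "R > 0"
  shows "b + (R\<^sup>2 / (norm (z - b))\<^sup>2) *\<^sub>R (z - b) \<noteq> b"
    and "let y = b + (R\<^sup>2 / (norm (z - b))\<^sup>2) *\<^sub>R (z - b) in b + (R\<^sup>2 / (norm (y - b))\<^sup>2) *\<^sub>R (y - b) = z"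
proof -
  define t where "t = R\<^sup>2 / (norm (z - b))\<^sup>2"
  have nz: "norm (z - b) \<noteq> 0" using assms by simp
  have tpos: "t > 0" using assms nz unfolding t_def by (simp add: field_simps)
  show "b + (R\<^sup>2 / (norm (z - b))\<^sup>2) *\<^sub>R (z - b) \<noteq> b"
    using tpos assms(1) unfolding t_def[symmetric] by simp
  have n2: "(norm (t *\<^sub>R (z - b)))\<^sup>2 = t\<^sup>2 * (norm (z - b))\<^sup>2"
    using tpos by (simp add: power_mult_distrib)
  have "R\<^sup>2 / (norm (t *\<^sub>R (z - b)))\<^sup>2 * t = 1"
    unfolding n2 using nz assms tpos unfolding t_def by (simp add: field_simps power2_eq_square)
  then have "b + (R\<^sup>2 / (norm (t *\<^sub>R (z - b)))\<^sup>2) *\<^sub>R (t *\<^sub>R (z - b)) = z"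
    by (metis (no_types, lifting) add.commute diff_add_cancel scaleR_one scaleR_scaleR)
  then show "let y = b + (R\<^sup>2 / (norm (z - b))\<^sup>2) *\<^sub>R (z - b) in b + (R\<^sup>2 / (norm (y - b))\<^sup>2) *\<^sub>R (y - b) = z"
    unfolding t_def[symmetric] Let_def by simp
qed

lemma keyA:
  fixes b z a :: "'a::real_inner"
  assumes R: "R > 0" and b: "b \<noteq> 0" and r: "0 < r" "r < norm b"
    and orth: "(z - a) \<bullet> b = 0"
    and a: "a = b - (R\<^sup>2 / (norm b)\<^sup>2) *\<^sub>R b"
  shows "z \<noteq> b \<and> (norm (b + (R\<^sup>2 / (norm (z - b))\<^sup>2) *\<^sub>R (z - b)))\<^sup>2 < r\<^sup>2
     \<longleftrightarrow> (norm (z - a))\<^sup>2 < R^4 * r\<^sup>2 / ((norm b)\<^sup>2 * ((norm b)\<^sup>2 - r\<^sup>2))"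
proof -
  define w where "w = z - b"
  define c where "c = R\<^sup>2 / (norm b)\<^sup>2"
  have nb: "norm b > 0" using b by simp
  have bb: "b \<bullet> b = (norm b)\<^sup>2" by (simp add: power2_norm_eq_inner)
  have ww: "w \<bullet> w = norm w * norm w" "b \<bullet> b = norm b * norm b"
    by (simp_all flip: power2_eq_square add: power2_norm_eq_inner)
  have za: "z - a = w + c *\<^sub>R b" unfolding w_def a c_def by (simp add: algebra_simps)
  have "b \<bullet> w = b \<bullet> (z - a) - c * (b \<bullet> b)" using za by (simp add: inner_add_right algebra_simps)
  also have "\<dots> = - R\<^sup>2" using orth nb unfolding bb c_def by (simp add: inner_commute)
  finally have bw: "b \<bullet> w = - R\<^sup>2" .
  have wnz: "w \<noteq> 0" using bw R by auto
  have nw: "(norm w)\<^sup>2 > 0" using wnz by simp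
  have "(norm (z - a))\<^sup>2 = (w + c *\<^sub>R b) \<bullet> (w + c *\<^sub>R b)" using za by (simp add: power2_norm_eq_inner)
  also have "\<dots> = (norm w)\<^sup>2 + 2 * c * (b \<bullet> w) + c\<^sup>2 * (norm b)\<^sup>2"
    by (simp add: inner_add_left inner_add_right power2_norm_eq_inner inner_commute power2_eq_square algebra_simps ww)
  also have "\<dots> = (norm w)\<^sup>2 - R^4 / (norm b)\<^sup>2"
    unfolding bw c_def using nb by (simp add: field_simps power2_eq_square eval_nat_numeral)
  finally have nza: "(norm (z - a))\<^sup>2 = (norm w)\<^sup>2 - R^4 / (norm b)\<^sup>2" .
  define t where "t = R\<^sup>2 / (norm w)\<^sup>2"
  have "(norm (b + t *\<^sub>R w))\<^sup>2 = (b + t *\<^sub>R w) \<bullet> (b + t *\<^sub>R w)" by (simp add: power2_norm_eq_inner)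
  also have "\<dots> = (norm b)\<^sup>2 + 2 * t * (b \<bullet> w) + t\<^sup>2 * (norm w)\<^sup>2"
    by (simp add: inner_add_left inner_add_right power2_norm_eq_inner inner_commute power2_eq_square algebra_simps ww)
  also have "\<dots> = (norm b)\<^sup>2 - R^4 / (norm w)\<^sup>2"
    unfolding bw t_def using nw by (simp add: field_simps power2_eq_square eval_nat_numeral)
  finally have nsz: "(norm (b + t *\<^sub>R w))\<^sup>2 = (norm b)\<^sup>2 - R^4 / (norm w)\<^sup>2" .
  have zb: "z \<noteq> b" using wnz w_def by simp
  have rb: "r\<^sup>2 < (norm b)\<^sup>2" using r by (simp add: power_strict_mono)
  have "(norm b)\<^sup>2 - R^4 / (norm w)\<^sup>2 < r\<^sup>2 \<longleftrightarrow> (norm w)\<^sup>2 < R^4 / ((norm b)\<^sup>2 - r\<^sup>2)"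
    using nw rb R by (simp add: field_simps)
  also have "\<dots> \<longleftrightarrow> (norm w)\<^sup>2 - R^4 / (norm b)\<^sup>2 < R^4 * r\<^sup>2 / ((norm b)\<^sup>2 * ((norm b)\<^sup>2 - r\<^sup>2))"
  proof -
    have "R^4 / ((norm b)\<^sup>2 - r\<^sup>2) - R^4 / (norm b)\<^sup>2 = R^4 * r\<^sup>2 / ((norm b)\<^sup>2 * ((norm b)\<^sup>2 - r\<^sup>2))"
      using nb rb by (simp add: field_simps)
    then show ?thesis by linarith
  qed
  finally show ?thesis using zb nsz nza unfolding t_def w_def by simp
qed

theorem mainTheorem7:
  fixes \<phi> :: "'a::euclidean_space option \<Rightarrow> 'a option"
    and \<psi> :: "'a \<Rightarrow> 'a"
    and b a p q q' :: 'a and R r :: real and k :: nat and \<Sigma> :: "'a set"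
  assumes "moebius \<phi>"
    and "\<phi> (Some b) = None" and "b \<noteq> 0"
    and "R > 0" and "euclidean_isometry \<psi>"
    and "\<phi> = map_option \<psi> \<circ> sphere_reflection b R"
    and "sphere_reflection b R (Some 0) = Some a"
    and "\<phi> (Some 0) = Some p" and "\<phi> None = Some q" and "\<phi> (Some a) = Some q'"
    and "affine \<Sigma>" and "aff_dim \<Sigma> = int k" and "p \<in> \<Sigma>"
    and "\<forall>x\<in>\<Sigma>. \<forall>y\<in>\<Sigma>. (x - y) \<bullet> (q - q') = 0"
    and "0 < r" and "r < norm b"
  shows "\<exists>c\<in>\<Sigma>. Some ` \<Sigma> \<inter> \<phi> ` (Some ` ball 0 r)
           = Some ` (\<Sigma> \<inter> ball c (R\<^sup>2 * r / (norm b * sqrt ((norm b)\<^sup>2 - r\<^sup>2))))"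
proof -
  note bnz = assms(3) and Rpos = assms(4) and r = assms(15,16)
  define s where "s = (\<lambda>x::'a. b + (R\<^sup>2 / (norm (x - b))\<^sup>2) *\<^sub>R (x - b))"
  have sr: "sphere_reflection b R (Some x) = Some (s x)" if "x \<noteq> b" for x
    using that unfolding sphere_reflection_def s_def by simp
  have phS: "\<phi> (Some x) = Some (\<psi> (s x))" if "x \<noteq> b" for x
    using sr[OF that] assms(6) by simp
  have s_ne: "s x \<noteq> b" and s_inv: "s (s x) = x" if "x \<noteq> b" for x
    using sig_inv[OF that Rpos] unfolding s_def Let_def by auto
  have a_eq: "a = s 0" using assms(7) sr[of 0] bnz by simp
  have a_form: "a = b - (R\<^sup>2 / (norm b)\<^sup>2) *\<^sub>R b"
    unfolding a_eq s_def by (simp add: algebra_simps)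
  have ab: "a \<noteq> b" using s_ne[of 0] bnz a_eq by simp
  have sa: "s a = 0" using s_inv[of 0] bnz a_eq by simp
  have pe: "p = \<psi> a" using assms(8) phS[of 0] bnz a_eq by simp
  have qe: "q = \<psi> b" using assms(9) assms(6) unfolding sphere_reflection_def by simp
  have q'e: "q' = \<psi> 0" using assms(10) phS[OF ab] sa by simp
  define L where "L = (\<lambda>x. \<psi> x - \<psi> 0)"
  have iso: "\<forall>x y. dist (\<psi> x) (\<psi> y) = dist x y" using assms(5) unfolding euclidean_isometry_def by simp
  have oL: "orthogonal_transformation L"
    unfolding orthogonal_transformation_isometry L_def using iso by (simp add: dist_norm)
  have linL: "linear L" using oL orthogonal_transformation_linear by blast
  have innL: "L v \<bullet> L w = v \<bullet> w" for v w using oL unfolding orthogonal_transformation_def by blast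
  have surjpsi: "\<exists>z. y = \<psi> z" for y
  proof -
    obtain z where "L z = y - \<psi> 0" using orthogonal_transformation_surj[OF oL] by (metis surjD)
    then show ?thesis unfolding L_def by (metis diff_add_cancel)
  qed
  have injpsi: "\<psi> x = \<psi> y \<Longrightarrow> x = y" for x y using iso by (metis dist_eq_0_iff)
  have psid: "\<psi> x - \<psi> y = L (x - y)" for x y
    using linear_diff[OF linL] unfolding L_def by simp
  define \<rho> where "\<rho> = R\<^sup>2 * r / (norm b * sqrt ((norm b)\<^sup>2 - r\<^sup>2))"
  have nb: "norm b > 0" using bnz by simp
  have rb: "r\<^sup>2 < (norm b)\<^sup>2" using r by (simp add: power_strict_mono)
  have rho_pos: "\<rho> > 0" unfolding \<rho>_def using nb rb Rpos r by simp
  have rho2: "\<rho>\<^sup>2 = R^4 * r\<^sup>2 / ((norm b)\<^sup>2 * ((norm b)\<^sup>2 - r\<^sup>2))"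
  proof -
    have sq: "(sqrt ((norm b)\<^sup>2 - r\<^sup>2))\<^sup>2 = (norm b)\<^sup>2 - r\<^sup>2" using rb by simp
    have "\<rho>\<^sup>2 = (R\<^sup>2)\<^sup>2 * r\<^sup>2 / ((norm b)\<^sup>2 * (sqrt ((norm b)\<^sup>2 - r\<^sup>2))\<^sup>2)"
      unfolding \<rho>_def by (simp add: power_divide power_mult_distrib)
    then show ?thesis unfolding sq by (simp add: flip: power_mult)
  qed
  have img: "\<phi> ` (Some ` ball 0 r) = Some ` ((\<psi> \<circ> s) ` ball 0 r)"
  proof -
    have "\<phi> (Some x) = Some ((\<psi> \<circ> s) x)" if "x \<in> ball 0 r" for x
    proof -
      have "x \<noteq> b" using that r by auto
      then show ?thesis using phS by simp
    qed
    then show ?thesis by (force simp: image_iff)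
  qed
  have key: "y \<in> (\<psi> \<circ> s) ` ball 0 r \<longleftrightarrow> y \<in> ball p \<rho>" if yS: "y \<in> \<Sigma>" for y
  proof -
    obtain z where yz: "y = \<psi> z" using surjpsi by blast
    have orth: "(z - a) \<bullet> b = 0"
    proof -
      have "(y - p) \<bullet> (q - q') = 0" using assms(14) yS assms(13) by blast
      then have "L (z - a) \<bullet> L (b - 0) = 0" unfolding yz pe qe q'e psid .
      then show ?thesis using innL by simp
    qed
    have dyz: "dist p y = norm (z - a)" using iso yz pe by (simp add: dist_norm norm_minus_commute)
    have "y \<in> (\<psi> \<circ> s) ` ball 0 r \<longleftrightarrow> z \<in> s ` ball 0 r"
      using injpsi yz by auto
    also have "\<dots> \<longleftrightarrow> z \<noteq> b \<and> (norm (s z))\<^sup>2 < r\<^sup>2"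
    proof
      assume "z \<in> s ` ball 0 r"
      then obtain x where x: "norm x < r" "z = s x" by auto
      have xb: "x \<noteq> b" using x r by auto
      have "z \<noteq> b" using s_ne[OF xb] x by simp
      moreover have "s z = x" using s_inv[OF xb] x by simp
      ultimately show "z \<noteq> b \<and> (norm (s z))\<^sup>2 < r\<^sup>2" using x by (simp add: power_strict_mono)
    next
      assume h: "z \<noteq> b \<and> (norm (s z))\<^sup>2 < r\<^sup>2"
      then have "norm (s z) < r" using r by (meson abs_le_square_iff less_le_not_le norm_ge_zero order_less_le_trans power2_less_imp_less)
      then show "z \<in> s ` ball 0 r" using s_inv h by (metis image_eqI mem_ball_0)
    qed
    also have "\<dots> \<longleftrightarrow> (norm (z - a))\<^sup>2 < \<rho>\<^sup>2"
      unfolding rho2 s_def using keyA[OF Rpos bnz r orth a_form] .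
    also have "\<dots> \<longleftrightarrow> norm (z - a) < \<rho>"
      using rho_pos by (meson norm_ge_zero power_less_imp_less_base power_strict_mono less_imp_le pos2)
    also have "\<dots> \<longleftrightarrow> y \<in> ball p \<rho>" using dyz by simp
    finally show ?thesis .
  qed
  have "\<Sigma> \<inter> (\<psi> \<circ> s) ` ball 0 r = \<Sigma> \<inter> ball p \<rho>" using key by blast
  then have "Some ` \<Sigma> \<inter> \<phi> ` (Some ` ball 0 r) = Some ` (\<Sigma> \<inter> ball p \<rho>)"
    unfolding img by (metis image_Int option.inject inj_def)
  then show ?thesis using assms(13) unfolding \<rho>_def by blast
qed

end
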